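(* Let $x,y,z$ be local coordinates on a 3-manifold and let $E,K,P$ be functions of $x$ only, $F,L,Q$ functions of $y$ only, $G,M,R$ functions of $z$ only, with $\Delta:=ELR+FMP+GKQ-EMQ-FKR-GLP\neq 0$ and $LR-MQ$, $MP-KR$, $KQ-LP$ nonzero. Consider the Stäckel metric $$g=\frac{\Delta}{LR-MQ}dx^2+\frac{\Delta}{MP-KR}dy^2+\frac{\Delta}{KQ-LP}dz^2$$ and the quadratic forms $$I_2=\frac{\Delta(GQ-FR)}{(LR-MQ)^2}dx^2+\frac{\Delta(ER-GP)}{(MP-KR)^2}dy^2+\frac{\Delta(FP-EQ)}{(KQ-LP)^2}dz^2,$$ $$I_3=\frac{\Delta(FM-GL)}{(LR-MQ)^2}dx^2+\frac{\Delta(GK-EM)}{(MP-KR)^2}dy^2+\frac{\Delta(EL-FK)}{(KQ-LP)^2}dz^2,$$ which are (classically known) first integrals, quadratic in velocities, of the geodesic flow of $g$. Fix constants $\lambda,\mu\in\mathbb{R}$ such that on an open set $U$ the equations $I_2-\lambda g=0$, $I_3-\mu g=0$ define at each point $m\in U$ four distinct real points of $PT_mM$, giving four direction fields $\tau_1,\dots,\tau_4$. Then: the integral curves of each $\tau_i$ are geodesics of $g$; at each point there are three mutually orthogonal planes $\pi_1,\pi_2,\pi_3\subset T_mM$ (namely the tangent planes to the coordinate surfaces $x=\mathrm{const}$, $y=\mathrm{const}$, $z=\mathrm{const}$) such that, for any fixed $k$, the reflections in $\pi_1,\pi_2,\pi_3$ map $\tau_k$ onto the other three directions; and the distributions $\pi_1,\pi_2,\pi_3$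 are integrable.
   Context: Quadratic forms such as $dx^2$ are evaluated on tangent vectors (velocities). A direction field is a smooth field of lines in $TM$. *)

theory Defs
  imports "HOL-Analysis.Analysis"
begin

text \<open>Points of the coordinate chart are p :: real^3 with coordinates
  x = p$1, y = p$2, z = p$3; tangent vectors are v :: real^3 in the
  coordinate frame (d/dx, d/dy, d/dz).\<close>

definition smooth_on :: "real set \<Rightarrow> (real \<Rightarrow> real) \<Rightarrow> bool" where
  "smooth_on S f \<longleftrightarrow> (\<forall>n. \<forall>x\<in>S. ((deriv ^^ n) f) differentiable (at x))"

definition Delta ::
  "(real\<Rightarrow>real) \<Rightarrow> (real\<Rightarrow>real) \<Rightarrow> (real\<Rightarrow>real) \<Rightarrow> (real\<Rightarrow>real) \<Rightarrow> (real\<Rightarrow>real) \<Rightarrow>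
   (real\<Rightarrow>real) \<Rightarrow> (real\<Rightarrow>real) \<Rightarrow> (real\<Rightarrow>real) \<Rightarrow> (real\<Rightarrow>real) \<Rightarrow> real^3 \<Rightarrow> real" where
  "Delta E F G K L M P Q R p =
     (let x = p$1; y = p$2; z = p$3 in
       E x * L y * R z + F y * M z * P x + G z * K x * Q y
     - E x * M z * Q y - F y * K x * R z - G z * L y * P x)"

definition g_coeff ::
  "(real\<Rightarrow>real) \<Rightarrow> (real\<Rightarrow>real) \<Rightarrow> (real\<Rightarrow>real) \<Rightarrow> (real\<Rightarrow>real) \<Rightarrow> (real\<Rightarrow>real) \<Rightarrow>
   (real\<Rightarrow>real) \<Rightarrow> (real\<Rightarrow>real) \<Rightarrow> (real\<Rightarrow>real) \<Rightarrow> (real\<Rightarrow>real) \<Rightarrow> real^3 \<Rightarrow> real^3" where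
  "g_coeff E F G K L M P Q R p =
     (let x = p$1; y = p$2; z = p$3; D = Delta E F G K L M P Q R p in
       vector [D / (L y * R z - M z * Q y),
               D / (M z * P x - K x * R z),
               D / (K x * Q y - L y * P x)])"

definition I2_coeff ::
  "(real\<Rightarrow>real) \<Rightarrow> (real\<Rightarrow>real) \<Rightarrow> (real\<Rightarrow>real) \<Rightarrow> (real\<Rightarrow>real) \<Rightarrow> (real\<Rightarrow>real) \<Rightarrow>
   (real\<Rightarrow>real) \<Rightarrow> (real\<Rightarrow>real) \<Rightarrow> (real\<Rightarrow>real) \<Rightarrow> (real\<Rightarrow>real) \<Rightarrow> real^3 \<Rightarrow> real^3" where
  "I2_coeff E F G K L M P Q R p =
     (let x = p$1; y = p$2; z = p$3; D = Delta E F G K L M P Q R p in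
       vector [D * (G z * Q y - F y * R z) / (L y * R z - M z * Q y)^2,
               D * (E x * R z - G z * P x) / (M z * P x - K x * R z)^2,
               D * (F y * P x - E x * Q y) / (K x * Q y - L y * P x)^2])"

definition I3_coeff ::
  "(real\<Rightarrow>real) \<Rightarrow> (real\<Rightarrow>real) \<Rightarrow> (real\<Rightarrow>real) \<Rightarrow> (real\<Rightarrow>real) \<Rightarrow> (real\<Rightarrow>real) \<Rightarrow>
   (real\<Rightarrow>real) \<Rightarrow> (real\<Rightarrow>real) \<Rightarrow> (real\<Rightarrow>real) \<Rightarrow> (real\<Rightarrow>real) \<Rightarrow> real^3 \<Rightarrow> real^3" where
  "I3_coeff E F G K L M P Q R p =
     (let x = p$1; y = p$2; z = p$3; D = Delta E F G K L M P Q R p in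
       vector [D * (F y * M z - G z * L y) / (L y * R z - M z * Q y)^2,
               D * (G z * K x - E x * M z) / (M z * P x - K x * R z)^2,
               D * (E x * L y - F y * K x) / (K x * Q y - L y * P x)^2])"

definition diag_quad :: "real^3 \<Rightarrow> real^3 \<Rightarrow> real" where
  "diag_quad a v = (\<Sum>i\<in>UNIV. a$i * (v$i)^2)"

definition diag_mat :: "real^3 \<Rightarrow> real^3^3" where
  "diag_mat a = (\<chi> i j. if i = j then a$i else 0)"

definition bilin :: "(real^3 \<Rightarrow> real^3^3) \<Rightarrow> real^3 \<Rightarrow> real^3 \<Rightarrow> real^3 \<Rightarrow> real" where
  "bilin Gm p u v = (\<Sum>i\<in>UNIV. \<Sum>j\<in>UNIV. Gm p $ i $ j * u$i * v$j)"

definition partial :: "3 \<Rightarrow> (real^3 \<Rightarrow> real) \<Rightarrow> real^3 \<Rightarrow> real" where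
  "partial i f p = deriv (\<lambda>t. f (p + t *\<^sub>R axis i 1)) 0"

definition christoffel :: "(real^3 \<Rightarrow> real^3^3) \<Rightarrow> 3 \<Rightarrow> 3 \<Rightarrow> 3 \<Rightarrow> real^3 \<Rightarrow> real" where
  "christoffel Gm k i j p = (1/2) * (\<Sum>l\<in>UNIV. matrix_inv (Gm p) $ k $ l *
      (partial i (\<lambda>q. Gm q $ j $ l) p + partial j (\<lambda>q. Gm q $ i $ l) p
       - partial l (\<lambda>q. Gm q $ i $ j) p))"

text \<open>A twice differentiable curve c (velocity c', acceleration c'') on an interval I is an
  unparametrized geodesic (pregeodesic): its covariant acceleration is everywhere proportional
  to its velocity, i.e. its trace is the trace of a geodesic.\<close>
definition pregeodesic :: "(real^3 \<Rightarrow> real^3^3) \<Rightarrow> real set \<Rightarrow> (real \<Rightarrow> real^3) \<Rightarrow>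
    (real \<Rightarrow> real^3) \<Rightarrow> (real \<Rightarrow> real^3) \<Rightarrow> bool" where
  "pregeodesic Gm I c c' c'' \<longleftrightarrow>
     (\<forall>t\<in>I. \<exists>a::real. \<forall>k.
        c'' t $ k + (\<Sum>i\<in>UNIV. \<Sum>j\<in>UNIV. christoffel Gm k i j (c t) * c' t $ i * c' t $ j)
          = a * c' t $ k)"

definition g_perp :: "(real^3 \<Rightarrow> real^3^3) \<Rightarrow> real^3 \<Rightarrow> (real^3) set \<Rightarrow> (real^3) set" where
  "g_perp Gm p S = {n. \<forall>u\<in>S. bilin Gm p u n = 0}"

definition g_reflect :: "(real^3 \<Rightarrow> real^3^3) \<Rightarrow> real^3 \<Rightarrow> (real^3) set \<Rightarrow> real^3 \<Rightarrow> real^3" where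
  "g_reflect Gm p \<pi> v =
     (let n = (SOME n. n \<in> g_perp Gm p \<pi> \<and> n \<noteq> 0) in
        v - (2 * bilin Gm p v n / bilin Gm p n n) *\<^sub>R n)"

text \<open>The tangent plane at any point to the coordinate surface {x_i = const}.\<close>
definition coord_plane :: "3 \<Rightarrow> (real^3) set" where
  "coord_plane i = {v. v $ i = 0}"

text \<open>A (codimension one) distribution D on the open set U is integrable: locally it is the
  kernel of the differential of a C^1 function with nonvanishing differential, i.e. it is
  tangent to the level surfaces of that function (Frobenius).\<close>
definition integrable_distribution :: "(real^3) set \<Rightarrow> (real^3 \<Rightarrow> (real^3) set) \<Rightarrow> bool" where
  "integrable_distribution U D \<longleftrightarrow>
     (\<forall>m\<in>U. \<exists>V f grad. open V \<and> m \<in> V \<and> V \<subseteq> U \<and> continuous_on V grad \<and>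
        (\<forall>q\<in>V. (f has_derivative (\<lambda>v. grad q \<bullet> v)) (at q) \<and> grad q \<noteq> 0 \<and>
                D q = {v. grad q \<bullet> v = 0}))"

end

theory Submission
  imports Defs
begin


definition Sset :: "real^3 \<Rightarrow> real^3 \<Rightarrow> (real^3) set" where
  "Sset \<alpha> \<beta> = {v. v \<noteq> 0 \<and> (\<Sum>i\<in>UNIV. \<alpha>$i * (v$i)^2) = 0 \<and> (\<Sum>i\<in>UNIV. \<beta>$i * (v$i)^2) = 0}"

lemma span_eq_scale:
  fixes x y :: "real^3"
  assumes "span {x} = span {y}"
  shows "\<exists>c. y = c *\<^sub>R x"
proof -
  have "y \<in> span {x}" using assms span_base[of y "{y}"] by simp
  then show ?thesis by (auto simp: span_singleton)
qed

lemma span_scale_eq: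
  fixes x :: "real^3"
  assumes "c \<noteq> 0"
  shows "span {c *\<^sub>R x} = span {x}"
proof
  show "span {c *\<^sub>R x} \<subseteq> span {x}" by (auto simp: span_singleton)
  show "span {x} \<subseteq> span {c *\<^sub>R x}"
  proof
    fix y assume "y \<in> span {x}"
    then obtain k where "y = k *\<^sub>R x" by (auto simp: span_singleton)
    then have "y = (k / c) *\<^sub>R (c *\<^sub>R x)" using assms by simp
    then show "y \<in> span {c *\<^sub>R x}" unfolding span_singleton by (intro image_eqI[where x="k/c"]) auto
  qed
qed

lemma inf_lines:
  fixes \<alpha> \<beta> sa t :: "real^3" and \<delta> :: real
  assumes d: "\<delta> > 0" and nn: "\<forall>\<epsilon>\<in>{0<..<\<delta>}. \<forall>i. 0 \<le> sa$i + \<epsilon> * t$i"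
    and a0: "(\<Sum>i\<in>UNIV. \<alpha>$i * sa$i) = 0" and a1: "(\<Sum>i\<in>UNIV. \<alpha>$i * t$i) = 0"
    and b0: "(\<Sum>i\<in>UNIV. \<beta>$i * sa$i) = 0" and b1: "(\<Sum>i\<in>UNIV. \<beta>$i * t$i) = 0"
    and ind: "\<forall>x y. (\<forall>i. x * sa$i + y * t$i = 0) \<longrightarrow> x = 0 \<and> y = 0"
  shows "infinite ((\<lambda>v. span {v}) ` Sset \<alpha> \<beta>)"
proof -
  define rt where "rt \<epsilon> = (\<chi> i. sqrt (sa$i + \<epsilon> * t$i))" for \<epsilon>
  have sq: "(rt \<epsilon> $ i)^2 = sa$i + \<epsilon> * t$i" if "\<epsilon> \<in> {0<..<\<delta>}" for \<epsilon> i
    using nn that unfolding rt_def by simp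
  have inS: "rt \<epsilon> \<in> Sset \<alpha> \<beta>" if e: "\<epsilon> \<in> {0<..<\<delta>}" for \<epsilon>
  proof -
    have "rt \<epsilon> \<noteq> 0"
    proof
      assume "rt \<epsilon> = 0"
      then have "\<forall>i. 1 * sa$i + \<epsilon> * t$i = 0" using sq[OF e] by (metis mult_1 vec_lambda_beta zero_index zero_power2)
      then show False using ind[rule_format, of 1 \<epsilon>] by simp
    qed
    moreover have "(\<Sum>i\<in>UNIV. \<alpha>$i * (rt \<epsilon> $ i)^2) = (\<Sum>i\<in>UNIV. \<alpha>$i * sa$i) + \<epsilon> * (\<Sum>i\<in>UNIV. \<alpha>$i * t$i)"
      using sq[OF e] by (simp add: sum.distrib sum_distrib_left algebra_simps)
    moreover have "(\<Sum>i\<in>UNIV. \<beta>$i * (rt \<epsilon> $ i)^2) = (\<Sum>i\<in>UNIV. \<beta>$i * sa$i) + \<epsilon> * (\<Sum>i\<in>UNIV. \<beta>$i * t$i)"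
      using sq[OF e] by (simp add: sum.distrib sum_distrib_left algebra_simps)
    ultimately show ?thesis unfolding Sset_def using a0 a1 b0 b1 by simp
  qed
  have inj: "inj_on (\<lambda>\<epsilon>. span {rt \<epsilon>}) {0<..<\<delta>}"
  proof (rule inj_onI)
    fix a b assume a: "a \<in> {0<..<\<delta>}" and b: "b \<in> {0<..<\<delta>}" and eq: "span {rt a} = span {rt b}"
    obtain c where c: "rt b = c *\<^sub>R rt a" using span_eq_scale[OF eq] by blast
    have "\<forall>i. (1 - c^2) * sa$i + (b - c^2 * a) * t$i = 0"
    proof
      fix i
      have "(rt b $ i)^2 = c^2 * (rt a $ i)^2" using c by (simp add: power_mult_distrib)
      then show "(1 - c^2) * sa$i + (b - c^2 * a) * t$i = 0" using sq[OF a, of i] sq[OF b, of i] by (simp add: algebra_simps)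
    qed
    then have "1 - c^2 = 0 \<and> b - c^2 * a = 0" using ind by blast
    then show "a = b" by simp
  qed
  have "infinite ((\<lambda>\<epsilon>. span {rt \<epsilon>}) ` {0<..<\<delta>})"
    using inj d by (simp add: finite_image_iff)
  moreover have "(\<lambda>\<epsilon>. span {rt \<epsilon>}) ` {0<..<\<delta>} \<subseteq> (\<lambda>v. span {v}) ` Sset \<alpha> \<beta>"
    using inS by auto
  ultimately show ?thesis using finite_subset by blast
qed



lemma three_cases: fixes i :: 3 obtains "i = 1" | "i = 2" | "i = 3" using exhaust_3 by blast

lemma dep_inf:
  fixes \<alpha> \<beta> \<gamma> s0 :: "real^3"
  assumes pos: "\<forall>i. s0$i > 0" and a0: "(\<Sum>i\<in>UNIV. \<alpha>$i * s0$i) = 0" and b0: "(\<Sum>i\<in>UNIV. \<beta>$i * s0$i) = 0"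
    and c0: "(\<Sum>i\<in>UNIV. \<gamma>$i * s0$i) = 0" and cnz: "\<gamma> \<noteq> 0"
    and ra: "\<alpha>$1 * \<gamma>$2 = \<alpha>$2 * \<gamma>$1" and rb: "\<beta>$1 * \<gamma>$2 = \<beta>$2 * \<gamma>$1"
  shows "infinite ((\<lambda>v. span {v}) ` Sset \<alpha> \<beta>)"
proof -
  have g12: "\<gamma>$1 \<noteq> 0 \<or> \<gamma>$2 \<noteq> 0"
  proof (rule ccontr)
    assume "\<not> ?thesis"
    then have "\<gamma>$1 = 0" "\<gamma>$2 = 0" by auto
    moreover have "\<gamma>$3 \<noteq> 0" using cnz calculation by (metis exhaust_3 vec_eq_iff zero_index)
    ultimately show False using c0 pos[rule_format, of 3] by (simp add: sum_3)
  qed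
  define t :: "real^3" where "t = vector [\<gamma>$2, - \<gamma>$1, 0]"
  define m where "m = min (s0$1) (s0$2)"
  define \<delta> where "\<delta> = m / (\<bar>\<gamma>$1\<bar> + \<bar>\<gamma>$2\<bar> + 1)"
  have m: "m > 0" "m \<le> s0$1" "m \<le> s0$2" using pos unfolding m_def by auto
  have dpos: "\<delta> > 0" unfolding \<delta>_def using m by (simp add: add_pos_nonneg)
  have nn: "\<forall>\<epsilon>\<in>{0<..<\<delta>}. \<forall>i. 0 \<le> s0$i + \<epsilon> * t$i"
  proof (intro ballI allI)
    fix \<epsilon> i assume e: "\<epsilon> \<in> {0<..<\<delta>}"
    have "\<epsilon> * (\<bar>\<gamma>$1\<bar> + \<bar>\<gamma>$2\<bar> + 1) < m" using e unfolding \<delta>_def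
      by (simp add: pos_less_divide_eq add_pos_nonneg)
    have e0: "0 < \<epsilon>" using e by simp
    from \<open>\<epsilon> * _ < m\<close> have lt: "\<epsilon> * \<bar>\<gamma>$1\<bar> + \<epsilon> * \<bar>\<gamma>$2\<bar> + \<epsilon> < m" by (simp add: distrib_left)
    have n1: "0 \<le> \<epsilon> * \<bar>\<gamma>$1\<bar>" and n2: "0 \<le> \<epsilon> * \<bar>\<gamma>$2\<bar>" using e by simp_all
    have b1: "\<epsilon> * \<bar>\<gamma>$1\<bar> \<le> m" using lt n1 n2 e0 by linarith
    have b2: "\<epsilon> * \<bar>\<gamma>$2\<bar> \<le> m" using lt n1 n2 e0 by linarith
    have "\<bar>\<epsilon> * \<gamma>$2\<bar> \<le> s0$1" "\<bar>\<epsilon> * \<gamma>$1\<bar> \<le> s0$2" using b1 b2 m e by (simp_all add: abs_mult)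
    then show "0 \<le> s0$i + \<epsilon> * t$i" using pos[rule_format, of i] unfolding t_def
      by (cases i rule: three_cases) (auto simp: abs_le_iff)
  qed
  show ?thesis
  proof (rule inf_lines[OF dpos nn a0 _ b0])
    show "(\<Sum>i\<in>UNIV. \<alpha>$i * t$i) = 0" unfolding t_def sum_3 using ra by (simp add: algebra_simps)
    show "(\<Sum>i\<in>UNIV. \<beta>$i * t$i) = 0" unfolding t_def sum_3 using rb by (simp add: algebra_simps)
    show "\<forall>x y. (\<forall>i. x * s0$i + y * t$i = 0) \<longrightarrow> x = 0 \<and> y = 0"
    proof (intro allI impI)
      fix x y assume h: "\<forall>i. x * s0$i + y * t$i = 0"
      have "x = 0" using h[rule_format, of 3] pos[rule_format, of 3] unfolding t_def by simp
      moreover have "y = 0" using h[rule_format, of 1] h[rule_format, of 2] g12 calculation unfolding t_def by auto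
      ultimately show "x = 0 \<and> y = 0" by simp
    qed
  qed
qed

lemma sign_sqrt:
  fixes a b c :: real
  assumes "a^2 = c * b^2" "c > 0"
  obtains s where "s = 1 \<or> s = -1" "a = s * sqrt c * b"
proof -
  have "a^2 = (sqrt c * b)^2" using assms by (simp add: power_mult_distrib)
  then have "a = sqrt c * b \<or> a = - (sqrt c * b)" by (simp add: power2_eq_iff)
  then show ?thesis using that[of 1] that[of "-1"] by auto
qed

lemma card3_le: "card {a, b, c} \<le> 3"
  by (auto simp: card_insert_if)

lemma card4:
  fixes \<alpha> \<beta> v :: "real^3"
  assumes c4: "card ((\<lambda>v. span {v}) ` Sset \<alpha> \<beta>) = 4" and v: "v \<in> Sset \<alpha> \<beta>"
  shows "(\<forall>i. v$i \<noteq> 0) \<and> \<not> (\<alpha>$1*\<beta>$2 = \<alpha>$2*\<beta>$1 \<and> \<alpha>$1*\<beta>$3 = \<alpha>$3*\<beta>$1 \<and> \<alpha>$2*\<beta>$3 = \<alpha>$3*\<beta>$2)"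
proof -
  let ?L = "(\<lambda>v. span {v}) ` Sset \<alpha> \<beta>"
  have fin: "finite ?L" using c4 by (metis card.infinite zero_neq_numeral)
  have vS: "v \<noteq> 0" "(\<Sum>i\<in>UNIV. \<alpha>$i * (v$i)^2) = 0" "(\<Sum>i\<in>UNIV. \<beta>$i * (v$i)^2) = 0"
    using v unfolding Sset_def by auto
  have stepA: "\<exists>c>0. \<forall>i. (w$i)^2 = c * (v$i)^2" if w: "w \<in> Sset \<alpha> \<beta>" for w
  proof (rule ccontr)
    assume nc: "\<not> ?thesis"
    have wS: "w \<noteq> 0" "(\<Sum>i\<in>UNIV. \<alpha>$i * (w$i)^2) = 0" "(\<Sum>i\<in>UNIV. \<beta>$i * (w$i)^2) = 0"
      using w unfolding Sset_def by auto
    have "infinite ?L"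
    proof (rule inf_lines[where sa="\<chi> i. (w$i)^2" and t="\<chi> i. (v$i)^2 - (w$i)^2" and \<delta>=1])
      show "\<forall>\<epsilon>\<in>{0<..<1}. \<forall>i. 0 \<le> (\<chi> i. (w$i)^2) $ i + \<epsilon> * (\<chi> i. (v$i)^2 - (w$i)^2) $ i"
      proof (intro ballI allI)
        fix \<epsilon> :: real and i assume "\<epsilon> \<in> {0<..<1}"
        then have "0 \<le> (1 - \<epsilon>) * (w$i)^2 + \<epsilon> * (v$i)^2" by (simp add: add_nonneg_nonneg)
        then show "0 \<le> (\<chi> i. (w$i)^2) $ i + \<epsilon> * (\<chi> i. (v$i)^2 - (w$i)^2) $ i" by (simp add: algebra_simps)
      qed
      show "(\<Sum>i\<in>UNIV. \<alpha>$i * (\<chi> i. (w$i)^2) $ i) = 0" using wS by simp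
      show "(\<Sum>i\<in>UNIV. \<beta>$i * (\<chi> i. (w$i)^2) $ i) = 0" using wS by simp
      show "(\<Sum>i\<in>UNIV. \<alpha>$i * (\<chi> i. (v$i)^2 - (w$i)^2) $ i) = 0"
        using wS vS by (simp add: right_diff_distrib sum_subtractf)
      show "(\<Sum>i\<in>UNIV. \<beta>$i * (\<chi> i. (v$i)^2 - (w$i)^2) $ i) = 0"
        using wS vS by (simp add: right_diff_distrib sum_subtractf)
      show "\<forall>x y. (\<forall>i. x * (\<chi> i. (w$i)^2) $ i + y * (\<chi> i. (v$i)^2 - (w$i)^2) $ i = 0) \<longrightarrow> x = 0 \<and> y = 0"
      proof (intro allI impI)
        fix x y assume h0: "\<forall>i. x * (\<chi> i. (w$i)^2) $ i + y * (\<chi> i. (v$i)^2 - (w$i)^2) $ i = 0"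
        have h: "(x - y) * (w$i)^2 + y * (v$i)^2 = 0" for i using h0[rule_format, of i] by (simp add: algebra_simps)
        obtain j where j: "w$j \<noteq> 0" using wS(1) by (metis vec_eq_iff zero_index)
        obtain l where l: "v$l \<noteq> 0" using vS(1) by (metis vec_eq_iff zero_index)
        show "x = 0 \<and> y = 0"
        proof (cases "y = 0")
          case True
          then show ?thesis using h[of j] j by simp
        next
          case False
          have xy: "x \<noteq> y" using h[of l] l False by auto
          define c where "c = - y / (x - y)"
          have wc: "(w$i)^2 = c * (v$i)^2" for i using h[of i] xy unfolding c_def by (simp add: field_simps)
          have "c * (v$j)^2 > 0" using wc[of j] j by (metis zero_less_power2)
          then have "c > 0" using zero_le_power2[of "v$j"] by (meson not_le mult_nonpos_nonneg)
          then show ?thesis using nc wc by blast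
        qed
      qed
    qed simp
    then show False using fin by simp
  qed
  define L4 where "L4 = {span {vector [v$1, v$2, v$3] :: real^3}, span {vector [v$1, - v$2, v$3]},
                         span {vector [v$1, v$2, - v$3]}, span {vector [v$1, - v$2, - v$3]}}"
  have sub: "?L \<subseteq> L4"
  proof
    fix X assume "X \<in> ?L"
    then obtain w where w: "w \<in> Sset \<alpha> \<beta>" and X: "X = span {w}" by auto
    obtain c where c: "c > 0" "\<forall>i. (w$i)^2 = c * (v$i)^2" using stepA[OF w] by blast
    obtain s1 where s1: "s1 = 1 \<or> s1 = -1" "w$1 = s1 * sqrt c * v$1" using sign_sqrt[OF c(2)[rule_format, of 1] c(1)] by blast
    obtain s2 where s2: "s2 = 1 \<or> s2 = -1" "w$2 = s2 * sqrt c * v$2" using sign_sqrt[OF c(2)[rule_format, of 2] c(1)] by blast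
    obtain s3 where s3: "s3 = 1 \<or> s3 = -1" "w$3 = s3 * sqrt c * v$3" using sign_sqrt[OF c(2)[rule_format, of 3] c(1)] by blast
    have ss: "s1 * s1 = 1" using s1 by auto
    have weq: "w = (s1 * sqrt c) *\<^sub>R (vector [v$1, (s1 * s2) * v$2, (s1 * s3) * v$3] :: real^3)"
      unfolding vec_eq_iff forall_3 using s1(2) s2(2) s3(2) ss by (simp add: algebra_simps)
    have nz: "s1 * sqrt c \<noteq> 0" using s1 c(1) by auto
    have X2: "X = span {vector [v$1, (s1 * s2) * v$2, (s1 * s3) * v$3] :: real^3}"
      unfolding X weq span_scale_eq[OF nz] ..
    have p2: "s1 * s2 = 1 \<or> s1 * s2 = -1" using s1(1) s2(1) by auto
    have p3: "s1 * s3 = 1 \<or> s1 * s3 = -1" using s1(1) s3(1) by auto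
    show "X \<in> L4" unfolding X2 L4_def using p2 p3 by (elim disjE) simp_all
  qed
  have finL4: "finite L4" unfolding L4_def by simp
  have v0: "\<forall>i. v$i \<noteq> 0"
  proof (rule ccontr)
    assume "\<not> ?thesis"
    then obtain i where i: "v$i = 0" by blast
    have "card L4 \<le> 3"
    proof (cases i rule: three_cases)
      case 1
      have "span {vector [v$1, - v$2, - v$3] :: real^3} = span {vector [v$1, v$2, v$3]}"
      proof -
        have "(vector [v$1, - v$2, - v$3] :: real^3) = (-1) *\<^sub>R vector [v$1, v$2, v$3]"
          using i 1 unfolding vec_eq_iff forall_3 by simp
        then show ?thesis using span_scale_eq[of "-1"] by simp
      qed
      then have "L4 = {span {vector [v$1, v$2, v$3] :: real^3}, span {vector [v$1, - v$2, v$3]},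
                         span {vector [v$1, v$2, - v$3]}}" unfolding L4_def by auto
      then show ?thesis using card3_le by simp
    next
      case 2
      then have "(vector [v$1, - v$2, v$3] :: real^3) = vector [v$1, v$2, v$3]" using i by simp
      then have "L4 = {span {vector [v$1, v$2, v$3] :: real^3},
                         span {vector [v$1, v$2, - v$3]}, span {vector [v$1, - v$2, - v$3]}}" unfolding L4_def by auto
      then show ?thesis using card3_le by simp
    next
      case 3
      then have "(vector [v$1, v$2, - v$3] :: real^3) = vector [v$1, v$2, v$3]" using i by simp
      then have "L4 = {span {vector [v$1, v$2, v$3] :: real^3}, span {vector [v$1, - v$2, v$3]},
                         span {vector [v$1, - v$2, - v$3]}}" unfolding L4_def by auto
      then show ?thesis using card3_le by simp
    qed
    moreover have "card ?L \<le> card L4" using card_mono[OF finL4 sub] .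
    ultimately show False using c4 by simp
  qed
  have indep: "\<not> (\<alpha>$1*\<beta>$2 = \<alpha>$2*\<beta>$1 \<and> \<alpha>$1*\<beta>$3 = \<alpha>$3*\<beta>$1 \<and> \<alpha>$2*\<beta>$3 = \<alpha>$3*\<beta>$2)"
  proof
    assume dep: "\<alpha>$1*\<beta>$2 = \<alpha>$2*\<beta>$1 \<and> \<alpha>$1*\<beta>$3 = \<alpha>$3*\<beta>$1 \<and> \<alpha>$2*\<beta>$3 = \<alpha>$3*\<beta>$2"
    let ?s0 = "\<chi> i. (v$i)^2 :: real^3"
    have pos: "\<forall>i. ?s0$i > 0" using v0 by simp
    have a0: "(\<Sum>i\<in>UNIV. \<alpha>$i * ?s0$i) = 0" and b0: "(\<Sum>i\<in>UNIV. \<beta>$i * ?s0$i) = 0" using vS by simp_all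
    have d1: "\<alpha>$1*\<beta>$2 = \<alpha>$2*\<beta>$1" using dep by blast
    have "infinite ?L"
    proof (cases "\<alpha> = 0")
      case False
      have r1: "\<alpha>$1 * \<alpha>$2 = \<alpha>$2 * \<alpha>$1" by (rule mult.commute)
      have r2: "\<beta>$1 * \<alpha>$2 = \<beta>$2 * \<alpha>$1" using d1 by (metis mult.commute)
      show ?thesis by (rule dep_inf[OF pos a0 b0 a0 False r1 r2])
    next
      case a: True
      show ?thesis
      proof (cases "\<beta> = 0")
        case False
        have r1: "\<alpha>$1 * \<beta>$2 = \<alpha>$2 * \<beta>$1" by (rule d1)
        have r2: "\<beta>$1 * \<beta>$2 = \<beta>$2 * \<beta>$1" by (rule mult.commute)
        show ?thesis by (rule dep_inf[OF pos a0 b0 b0 False r1 r2])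
      next
        case True
        define g :: "real^3" where "g = vector [(v$2)^2, - ((v$1)^2), 0]"
        have g2: "g$2 \<noteq> 0" unfolding g_def using v0 by simp
        have gnz: "g \<noteq> 0" using g2 by (metis zero_index)
        have c0: "(\<Sum>i\<in>UNIV. g$i * ?s0$i) = 0" unfolding g_def sum_3 by simp
        have r1: "\<alpha>$1 * g$2 = \<alpha>$2 * g$1" using a by simp
        have r2: "\<beta>$1 * g$2 = \<beta>$2 * g$1" using True by simp
        show ?thesis by (rule dep_inf[OF pos a0 b0 c0 gnz r1 r2])
      qed
    qed
    then show False using fin by simp
  qed
  show ?thesis using v0 indep by blast
qed



definition flip :: "3 \<Rightarrow> real^3 \<Rightarrow> real^3" where
  "flip i v = (\<chi> j. if j = i then - v$j else v$j)"

lemma flip_sq: "(flip i v $ j)^2 = (v$j)^2"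
  unfolding flip_def by simp

lemma flip_in: "v \<in> Sset \<alpha> \<beta> \<Longrightarrow> flip i v \<in> Sset \<alpha> \<beta>"
proof -
  assume v: "v \<in> Sset \<alpha> \<beta>"
  have "flip i v \<noteq> 0"
  proof
    assume "flip i v = 0"
    then have "flip i (flip i v) = 0" by (simp add: flip_def vec_eq_iff)
    moreover have "flip i (flip i v) = v" by (simp add: flip_def vec_eq_iff)
    ultimately have "v = 0" by simp
    then show False using v unfolding Sset_def by simp
  qed
  then show ?thesis using v unfolding Sset_def by (simp add: flip_sq)
qed

lemma other_index: fixes i j :: 3 obtains k where "k \<noteq> i" "k \<noteq> j"
proof -
  have "\<exists>k::3. k \<noteq> i \<and> k \<noteq> j"
  proof (cases i rule: three_cases; cases j rule: three_cases)
  qed (rule exI[of _ 1] exI[of _ 2] exI[of _ 3], simp)+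
  then show ?thesis using that by blast
qed

lemma flip_ne_v:
  assumes "\<forall>k. v$k \<noteq> 0"
  shows "span {flip i v} \<noteq> span {v}"
proof
  assume "span {flip i v} = span {v}"
  then obtain c where c: "v = c *\<^sub>R flip i v" using span_eq_scale by blast
  obtain k where k: "k \<noteq> i" "k \<noteq> i" using other_index by blast
  have "v$i = - c * v$i" using arg_cong[OF c, of "\<lambda>x. x$i"] unfolding flip_def by simp
  then have "(1 + c) * v$i = 0" by (simp add: algebra_simps)
  then have "c = -1" using assms by simp
  moreover have "v$k = c * v$k" using arg_cong[OF c, of "\<lambda>x. x$k"] k unfolding flip_def by simp
  ultimately show False using assms by simp
qed

lemma flip_ne:
  assumes "\<forall>k. v$k \<noteq> 0" "i \<noteq> j"
  shows "span {flip i v} \<noteq> span {flip j v}"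
proof
  assume "span {flip i v} = span {flip j v}"
  then obtain c where c: "flip j v = c *\<^sub>R flip i v" using span_eq_scale by blast
  obtain k where k: "k \<noteq> i" "k \<noteq> j" using other_index by blast
  have "v$i = - c * v$i" using arg_cong[OF c, of "\<lambda>x. x$i"] assms(2) unfolding flip_def by simp
  then have "(1 + c) * v$i = 0" by (simp add: algebra_simps)
  then have "c = -1" using assms by simp
  moreover have "v$k = c * v$k" using arg_cong[OF c, of "\<lambda>x. x$k"] k unfolding flip_def by simp
  ultimately show False using assms by simp
qed

lemma reflect_lines:
  assumes c4: "card ((\<lambda>v. span {v}) ` Sset \<alpha> \<beta>) = 4" and v: "v \<in> Sset \<alpha> \<beta>"
  shows "(\<lambda>i. span {flip i v}) ` UNIV = (\<lambda>v. span {v}) ` Sset \<alpha> \<beta> - {span {v}}"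
proof -
  let ?L = "(\<lambda>v. span {v}) ` Sset \<alpha> \<beta>"
  have v0: "\<forall>k. v$k \<noteq> 0" using card4[OF c4 v] by blast
  have fin: "finite ?L" using c4 by (metis card.infinite zero_neq_numeral)
  let ?T = "{span {v}, span {flip 1 v}, span {flip 2 v}, span {flip 3 v}}"
  have sub: "?T \<subseteq> ?L" using v flip_in[OF v] by auto
  have n1: "span {flip i v} \<noteq> span {v}" for i using flip_ne_v[OF v0] .
  have n2: "i \<noteq> j \<Longrightarrow> span {flip i v} \<noteq> span {flip j v}" for i j using flip_ne[OF v0] by blast
  have "card ?T = 4"
    using n1[of 1] n1[of 2] n1[of 3] n2[of 1 2] n2[of 1 3] n2[of 2 3] by simp
  then have T: "?T = ?L" using card_subset_eq[OF fin sub] c4 by simp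
  have "(\<lambda>i. span {flip i v}) ` UNIV = {span {flip 1 v}, span {flip 2 v}, span {flip 3 v}}"
    by (auto simp: UNIV_3)
  also have "\<dots> = ?T - {span {v}}" using n1 by auto
  finally show ?thesis using T by simp
qed

lemma bilin_diag: "bilin (\<lambda>p. diag_mat (a p)) p u v = (\<Sum>i\<in>UNIV. a p $ i * u$i * v$i)"
  unfolding bilin_def diag_mat_def
  by (simp add: if_distrib[of "\<lambda>x. x * _"] cong: if_cong)

lemma sum_single:
  fixes n :: "real^3"
  assumes "\<forall>l. l \<noteq> i \<longrightarrow> n$l = 0"
  shows "(\<Sum>m\<in>UNIV. f m * n$m) = f i * n$i"
proof -
  have "(\<Sum>m\<in>UNIV. f m * n$m) = (\<Sum>m\<in>UNIV. if m = i then f i * n$i else 0)"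
    using assms by (intro sum.cong) auto
  then show ?thesis by simp
qed

lemma perp_char:
  fixes a :: "real^3 \<Rightarrow> real^3"
  assumes "\<forall>l. a p $ l \<noteq> 0" "n \<in> g_perp (\<lambda>q. diag_mat (a q)) p (coord_plane i)"
  shows "\<forall>l. l \<noteq> i \<longrightarrow> n$l = 0"
proof (intro allI impI)
  fix l assume l: "l \<noteq> i"
  have "bilin (\<lambda>q. diag_mat (a q)) p (axis l 1) n = 0"
    using assms(2) l unfolding g_perp_def coord_plane_def by (simp add: axis_def)
  then have "(\<Sum>m\<in>UNIV. (a p $ m * axis l 1 $ m) * n$m) = 0" unfolding bilin_diag by (simp add: mult.assoc)
  moreover have "\<forall>m. m \<noteq> l \<longrightarrow> axis l (1::real) $ m = 0" by (simp add: axis_def)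
  then have "(\<Sum>m\<in>UNIV. (a p $ m * n$m) * axis l 1 $ m) = (a p $ l * n$l) * axis l 1 $ l"
    by (rule sum_single)
  ultimately have "a p $ l * n $ l = 0" by (simp add: algebra_simps)
  then show "n$l = 0" using assms(1) by simp
qed

lemma perp_orth:
  fixes a :: "real^3 \<Rightarrow> real^3"
  assumes "\<forall>l. a p $ l \<noteq> 0" "i \<noteq> j"
    "n1 \<in> g_perp (\<lambda>q. diag_mat (a q)) p (coord_plane i)" "n2 \<in> g_perp (\<lambda>q. diag_mat (a q)) p (coord_plane j)"
  shows "bilin (\<lambda>q. diag_mat (a q)) p n1 n2 = 0"
proof -
  have z1: "\<forall>l. l \<noteq> i \<longrightarrow> n1$l = 0" by (rule perp_char[OF assms(1,3)])
  have z2: "\<forall>l. l \<noteq> j \<longrightarrow> n2$l = 0" by (rule perp_char[OF assms(1,4)])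
  have "a p $ m * n1$m * n2$m = 0" for m using z1 z2 assms(2) by (cases "m = i") auto
  then show ?thesis unfolding bilin_diag by (intro sum.neutral) blast
qed

lemma reflect_flip:
  fixes a :: "real^3 \<Rightarrow> real^3"
  assumes a: "\<forall>l. a p $ l \<noteq> 0"
  shows "g_reflect (\<lambda>q. diag_mat (a q)) p (coord_plane i) v = flip i v"
proof -
  let ?Gm = "\<lambda>q. diag_mat (a q)"
  define n where "n = (SOME n. n \<in> g_perp ?Gm p (coord_plane i) \<and> n \<noteq> 0)"
  have ex: "\<exists>n. n \<in> g_perp ?Gm p (coord_plane i) \<and> n \<noteq> 0"
  proof (intro exI conjI)
    show "axis i (1::real) \<noteq> 0" by simp
    have "\<forall>m. m \<noteq> i \<longrightarrow> axis i (1::real) $ m = 0" by (simp add: axis_def)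
    then have "bilin ?Gm p u (axis i 1) = a p $ i * u $ i" for u
      unfolding bilin_diag using sum_single[of i "axis i 1" "\<lambda>m. a p $ m * u $ m"] by simp
    then show "axis i 1 \<in> g_perp ?Gm p (coord_plane i)" unfolding g_perp_def coord_plane_def by simp
  qed
  have n: "n \<in> g_perp ?Gm p (coord_plane i)" "n \<noteq> 0" using someI_ex[OF ex] unfolding n_def by auto
  have z: "\<forall>l. l \<noteq> i \<longrightarrow> n$l = 0" by (rule perp_char[OF a n(1)])
  have ni: "n$i \<noteq> 0" using n(2) z by (metis vec_eq_iff zero_index)
  have b1: "bilin ?Gm p v n = a p $ i * v$i * n$i"
    unfolding bilin_diag using sum_single[OF z, of "\<lambda>m. a p $ m * v $ m"] by simp
  have b2: "bilin ?Gm p n n = a p $ i * n$i * n$i"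
    unfolding bilin_diag using sum_single[OF z, of "\<lambda>m. a p $ m * n $ m"] by simp
  have coef: "2 * bilin ?Gm p v n / bilin ?Gm p n n = 2 * v$i / n$i"
    unfolding b1 b2 using a ni by (simp add: field_simps)
  show ?thesis
    unfolding g_reflect_def Let_def n_def[symmetric] coef
    unfolding vec_eq_iff flip_def
  proof
    fix l
    show "(v - (2 * v $ i / n $ i) *\<^sub>R n) $ l = (\<chi> j. if j = i then - v $ j else v $ j) $ l"
      using z ni by (cases "l = i") (simp_all add: field_simps)
  qed
qed

lemma chris_sum:
  fixes Gd :: "real^3^3" and gk :: real and v :: "real^3" and k :: 3
  assumes "gk \<noteq> 0"
  shows "(\<Sum>i\<in>UNIV. \<Sum>j\<in>UNIV. (1/2) * (1/gk) * ((if j = k then Gd$k$i else 0) + (if i = k then Gd$k$j else 0)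
            - (if i = j then Gd$i$k else 0)) * v$i * v$j)
       = (2 * (\<Sum>j\<in>UNIV. Gd$k$j * v$j) * v$k - (\<Sum>j\<in>UNIV. Gd$j$k * (v$j)^2)) / (2 * gk)"
  using assms by (cases k rule: three_cases) (simp_all add: sum_3 field_simps power2_eq_square)

lemma smooth_diff: "smooth_on S f \<Longrightarrow> x \<in> S \<Longrightarrow> f differentiable (at x)"
  unfolding smooth_on_def by (metis funpow_0)

lemma coord_integrable:
  assumes "open U"
  shows "integrable_distribution U (\<lambda>p. coord_plane i)"
  unfolding integrable_distribution_def
proof
  fix m assume m: "m \<in> U"
  have e: "(\<lambda>v. axis i (1::real) \<bullet> v) = (\<lambda>v::real^3. v$i)" by (simp add: inner_axis')
  have d: "((\<lambda>q::real^3. q$i) has_derivative (\<lambda>v. axis i 1 \<bullet> v)) (at q)" for q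
    unfolding e by (rule bounded_linear_imp_has_derivative[OF bounded_linear_vec_nth])
  have c: "coord_plane i = {v. axis i 1 \<bullet> v = 0}" unfolding coord_plane_def by (simp add: inner_axis')
  show "\<exists>V f grad. open V \<and> m \<in> V \<and> V \<subseteq> U \<and> continuous_on V grad \<and>
        (\<forall>q\<in>V. (f has_derivative (\<lambda>v. grad q \<bullet> v)) (at q) \<and> grad q \<noteq> 0 \<and> coord_plane i = {v. grad q \<bullet> v = 0})"
    by (rule exI[of _ U], rule exI[of _ "\<lambda>q. q$i"], rule exI[of _ "\<lambda>q. axis i 1"])
       (use assms m d c in auto)
qed



lemma par_lemma:
  fixes N v z :: "real^3"
  assumes "N$j \<noteq> 0" "v$j \<noteq> 0" "\<forall>k. v$k * N$j = v$j * N$k" "\<forall>k. z$k * N$j = z$j * N$k"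
  shows "z$k = z$j / v$j * v$k"
proof -
  have "v$k = v$j * N$k / N$j" "z$k = z$j * N$k / N$j" using assms by (simp_all add: field_simps)
  then show ?thesis using assms(2) by simp
qed


lemma minors_all:
  fixes v N :: "real^3"
  assumes "v$2 * N$3 = v$3 * N$2" "v$3 * N$1 = v$1 * N$3" "v$1 * N$2 = v$2 * N$1"
  shows "v$a * N$b = v$b * N$a"
  using assms by (cases a rule: three_cases; cases b rule: three_cases) (simp_all add: mult.commute)

lemma kernel3:
  fixes A B z v :: "real^3"
  assumes "A$1 * v$1 + A$2 * v$2 + A$3 * v$3 = 0" "B$1 * v$1 + B$2 * v$2 + B$3 * v$3 = 0"
    "A$1 * z$1 + A$2 * z$2 + A$3 * z$3 = 0" "B$1 * z$1 + B$2 * z$2 + B$3 * z$3 = 0"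
    "\<not> (A$1*B$2 = A$2*B$1 \<and> A$1*B$3 = A$3*B$1 \<and> A$2*B$3 = A$3*B$2)"
    "\<forall>i. v$i \<noteq> 0"
  shows "\<exists>a. \<forall>k. z$k = a * v$k"
proof -
  define N :: "real^3" where "N = vector [A$2*B$3 - A$3*B$2, A$3*B$1 - A$1*B$3, A$1*B$2 - A$2*B$1]"
  have N: "N$1 = A$2*B$3 - A$3*B$2" "N$2 = A$3*B$1 - A$1*B$3" "N$3 = A$1*B$2 - A$2*B$1"
    unfolding N_def by simp_all
  have v: "v$2 * N$3 = v$3 * N$2" "v$3 * N$1 = v$1 * N$3" "v$1 * N$2 = v$2 * N$1"
    using assms(1,2) unfolding N by algebra+
  have z: "z$2 * N$3 = z$3 * N$2" "z$3 * N$1 = z$1 * N$3" "z$1 * N$2 = z$2 * N$1"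
    using assms(3,4) unfolding N by algebra+
  obtain j where j: "N$j \<noteq> 0" using assms(5) N by (metis eq_iff_diff_eq_0 mult.commute)
  show ?thesis
    using par_lemma[OF j assms(6)[rule_format, of j], of z] minors_all[OF v] minors_all[OF z] by blast
qed

lemma conserv:
  fixes g r :: "real^3" and Gd dr :: "real^3^3" and v w :: "real^3" and lam :: real
  assumes g: "\<forall>i. g$i \<noteq> 0"
    and st: "\<forall>i k. dr$i$k * g$i = (r$i - r$k) * Gd$i$k"
    and der: "(\<Sum>i\<in>UNIV. ((\<Sum>k\<in>UNIV. dr$i$k * v$k) * g$i + (r$i - lam) * (\<Sum>k\<in>UNIV. Gd$i$k * v$k)) * (v$i)^2
               + (r$i - lam) * g$i * (2 * v$i * w$i)) = 0"
  shows "(\<Sum>i\<in>UNIV. (r$i - lam) * g$i * v$i * (w$i + (2 * (\<Sum>j\<in>UNIV. Gd$i$j * v$j) * v$i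
            - (\<Sum>j\<in>UNIV. Gd$j$i * (v$j)^2)) / (2 * g$i))) = 0"
proof -
  have e: "dr$i$k * g$i = (r$i - r$k) * Gd$i$k" for i k using st by blast
  have g0: "g$1 \<noteq> 0" "g$2 \<noteq> 0" "g$3 \<noteq> 0" using g by auto
  have "(\<Sum>i\<in>UNIV. (r$i - lam) * g$i * v$i * (w$i + (2 * (\<Sum>j\<in>UNIV. Gd$i$j * v$j) * v$i
            - (\<Sum>j\<in>UNIV. Gd$j$i * (v$j)^2)) / (2 * g$i)))
     = (\<Sum>i\<in>UNIV. (r$i - lam) * g$i * v$i * w$i + (r$i - lam) * v$i * (2 * (\<Sum>j\<in>UNIV. Gd$i$j * v$j) * v$i
            - (\<Sum>j\<in>UNIV. Gd$j$i * (v$j)^2)) / 2)"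
    using g by (intro sum.cong) (auto simp: field_simps)
  also have "\<dots> = 0"
  proof -
    have rw: "(\<Sum>k\<in>UNIV. dr$i$k * v$k) * g$i = (\<Sum>k\<in>UNIV. (r$i - r$k) * Gd$i$k * v$k)" for i
      unfolding sum_distrib_right by (intro sum.cong refl) (metis e mult.commute mult.left_commute)
    have der': "(\<Sum>i\<in>UNIV. ((\<Sum>k\<in>UNIV. (r$i - r$k) * Gd$i$k * v$k) + (r$i - lam) * (\<Sum>k\<in>UNIV. Gd$i$k * v$k)) * (v$i)^2
               + (r$i - lam) * g$i * (2 * v$i * w$i)) = 0"
      using der unfolding rw .
    have "2 * (\<Sum>i\<in>UNIV. (r$i - lam) * g$i * v$i * w$i + (r$i - lam) * v$i * (2 * (\<Sum>j\<in>UNIV. Gd$i$j * v$j) * v$i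
            - (\<Sum>j\<in>UNIV. Gd$j$i * (v$j)^2)) / 2) = (\<Sum>i\<in>UNIV. ((\<Sum>k\<in>UNIV. (r$i - r$k) * Gd$i$k * v$k) + (r$i - lam) * (\<Sum>k\<in>UNIV. Gd$i$k * v$k)) * (v$i)^2
               + (r$i - lam) * g$i * (2 * v$i * w$i))"
      unfolding sum_3 by (simp add: field_simps power2_eq_square)
    then show ?thesis using der' by simp
  qed
  finally show ?thesis .
qed


lemma geo_alg:
  fixes g r s v w :: "real^3" and Gd dr ds :: "real^3^3" and lam mu :: real
  assumes g: "\<forall>i. g$i \<noteq> 0"
    and st2: "\<forall>i k. dr$i$k * g$i = (r$i - r$k) * Gd$i$k"
    and st3: "\<forall>i k. ds$i$k * g$i = (s$i - s$k) * Gd$i$k"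
    and c2: "(\<Sum>i\<in>UNIV. (r$i - lam) * g$i * (v$i)^2) = 0"
    and c3: "(\<Sum>i\<in>UNIV. (s$i - mu) * g$i * (v$i)^2) = 0"
    and der2: "(\<Sum>i\<in>UNIV. ((\<Sum>k\<in>UNIV. dr$i$k * v$k) * g$i + (r$i - lam) * (\<Sum>k\<in>UNIV. Gd$i$k * v$k)) * (v$i)^2
               + (r$i - lam) * g$i * (2 * v$i * w$i)) = 0"
    and der3: "(\<Sum>i\<in>UNIV. ((\<Sum>k\<in>UNIV. ds$i$k * v$k) * g$i + (s$i - mu) * (\<Sum>k\<in>UNIV. Gd$i$k * v$k)) * (v$i)^2
               + (s$i - mu) * g$i * (2 * v$i * w$i)) = 0"
    and v0: "\<forall>i. v$i \<noteq> 0"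
    and ind: "\<not> (((r$1 - lam) * g$1) * ((s$2 - mu) * g$2) = ((r$2 - lam) * g$2) * ((s$1 - mu) * g$1) \<and>
                 ((r$1 - lam) * g$1) * ((s$3 - mu) * g$3) = ((r$3 - lam) * g$3) * ((s$1 - mu) * g$1) \<and>
                 ((r$2 - lam) * g$2) * ((s$3 - mu) * g$3) = ((r$3 - lam) * g$3) * ((s$2 - mu) * g$2))"
  shows "\<exists>a. \<forall>k. w$k + (2 * (\<Sum>j\<in>UNIV. Gd$k$j * v$j) * v$k - (\<Sum>j\<in>UNIV. Gd$j$k * (v$j)^2)) / (2 * g$k) = a * v$k"
proof -
  define z :: "real^3" where "z = (\<chi> k. w$k + (2 * (\<Sum>j\<in>UNIV. Gd$k$j * v$j) * v$k - (\<Sum>j\<in>UNIV. Gd$j$k * (v$j)^2)) / (2 * g$k))"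
  define A :: "real^3" where "A = (\<chi> i. (r$i - lam) * g$i * v$i)"
  define B :: "real^3" where "B = (\<chi> i. (s$i - mu) * g$i * v$i)"
  have Az: "(\<Sum>i\<in>UNIV. A$i * z$i) = 0"
    using conserv[OF g st2 der2] unfolding A_def z_def by simp
  have Bz: "(\<Sum>i\<in>UNIV. B$i * z$i) = 0"
    using conserv[OF g st3 der3] unfolding B_def z_def by simp
  have Av: "(\<Sum>i\<in>UNIV. A$i * v$i) = 0" using c2 unfolding A_def by (simp add: power2_eq_square mult.assoc)
  have Bv: "(\<Sum>i\<in>UNIV. B$i * v$i) = 0" using c3 unfolding B_def by (simp add: power2_eq_square mult.assoc)
  have vv: "v$1 \<noteq> 0" "v$2 \<noteq> 0" "v$3 \<noteq> 0" using v0 by auto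
  have cr: "\<not> (A$1*B$2 = A$2*B$1 \<and> A$1*B$3 = A$3*B$1 \<and> A$2*B$3 = A$3*B$2)"
  proof
    assume h: "A$1*B$2 = A$2*B$1 \<and> A$1*B$3 = A$3*B$1 \<and> A$2*B$3 = A$3*B$2"
    have e: "A$a*B$b = (v$a * v$b) * (((r$a - lam) * g$a) * ((s$b - mu) * g$b))" for a b
      unfolding A_def B_def by (simp add: algebra_simps)
    have "((r$1 - lam) * g$1) * ((s$2 - mu) * g$2) = ((r$2 - lam) * g$2) * ((s$1 - mu) * g$1)"
      using h e[of 1 2] e[of 2 1] vv by (simp add: mult.commute[of "v$2" "v$1"])
    moreover have "((r$1 - lam) * g$1) * ((s$3 - mu) * g$3) = ((r$3 - lam) * g$3) * ((s$1 - mu) * g$1)"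
      using h e[of 1 3] e[of 3 1] vv by (simp add: mult.commute[of "v$3" "v$1"])
    moreover have "((r$2 - lam) * g$2) * ((s$3 - mu) * g$3) = ((r$3 - lam) * g$3) * ((s$2 - mu) * g$2)"
      using h e[of 2 3] e[of 3 2] vv by (simp add: mult.commute[of "v$3" "v$2"])
    ultimately show False using ind by blast
  qed
  obtain a where "\<forall>k. z$k = a * v$k"
    using kernel3[of A v B z] Av Bv Az Bz cr v0 unfolding sum_3 by blast
  then show ?thesis unfolding z_def by auto
qed





lemma diag_mat_mult: "diag_mat a ** diag_mat b = diag_mat (\<chi> i. a$i * b$i)"
  unfolding diag_mat_def matrix_matrix_mult_def
  by (simp add: vec_eq_iff if_distrib[of "\<lambda>x. x * _"] cong: if_cong)

lemma matrix_inv_diag: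
  fixes a :: "real^3"
  assumes "\<forall>i. a$i \<noteq> 0"
  shows "matrix_inv (diag_mat a) = diag_mat (\<chi> i. 1 / a$i)"
proof -
  let ?B = "diag_mat (\<chi> i. 1 / a$i)"
  have one: "diag_mat (\<chi> i. 1) = (mat 1 :: real^3^3)" unfolding diag_mat_def mat_def by (simp add: vec_eq_iff)
  have AB: "diag_mat a ** ?B = mat 1" and BA: "?B ** diag_mat a = mat 1"
    unfolding diag_mat_mult using assms one by simp_all
  have uniq: "A' = ?B" if "diag_mat a ** A' = mat 1 \<and> A' ** diag_mat a = mat 1" for A' :: "real^3^3"
  proof -
    have "A' = A' ** (diag_mat a ** ?B)" using AB by simp
    also have "\<dots> = (A' ** diag_mat a) ** ?B" by (simp add: matrix_mul_assoc)
    also have "\<dots> = ?B" using that by simp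
    finally show ?thesis .
  qed
  show ?thesis unfolding matrix_inv_def
    by (rule uniq, rule someI[of "\<lambda>A'. diag_mat a ** A' = mat 1 \<and> A' ** diag_mat a = mat 1" ?B]) (use AB BA in simp)
qed

context fixes E F G K L M P Q R :: "real \<Rightarrow> real" begin

definition Cv :: "real^3 \<Rightarrow> real^3" where "Cv p = vector [L (p$2) * R (p$3) - M (p$3) * Q (p$2),
                            M (p$3) * P (p$1) - K (p$1) * R (p$3),
                            K (p$1) * Q (p$2) - L (p$2) * P (p$1)]"
definition N2v :: "real^3 \<Rightarrow> real^3" where "N2v p = vector [G (p$3) * Q (p$2) - F (p$2) * R (p$3),
                             E (p$1) * R (p$3) - G (p$3) * P (p$1),
                             F (p$2) * P (p$1) - E (p$1) * Q (p$2)]"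
definition N3v :: "real^3 \<Rightarrow> real^3" where "N3v p = vector [F (p$2) * M (p$3) - G (p$3) * L (p$2),
                             G (p$3) * K (p$1) - E (p$1) * M (p$3),
                             E (p$1) * L (p$2) - F (p$2) * K (p$1)]"
definition DD :: "real^3 \<Rightarrow> real" where "DD p = E (p$1) * (Cv p $ 1) + F (p$2) * (Cv p $ 2) + G (p$3) * (Cv p $ 3)"

definition dCv :: "real^3 \<Rightarrow> real^3 \<Rightarrow> real^3" where "dCv p u = vector [
   deriv L (p$2) * u$2 * R (p$3) + L (p$2) * (deriv R (p$3) * u$3) - deriv M (p$3) * u$3 * Q (p$2) - M (p$3) * (deriv Q (p$2) * u$2),
   deriv M (p$3) * u$3 * P (p$1) + M (p$3) * (deriv P (p$1) * u$1) - deriv K (p$1) * u$1 * R (p$3) - K (p$1) * (deriv R (p$3) * u$3),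
   deriv K (p$1) * u$1 * Q (p$2) + K (p$1) * (deriv Q (p$2) * u$2) - deriv L (p$2) * u$2 * P (p$1) - L (p$2) * (deriv P (p$1) * u$1)]"
definition dN2v :: "real^3 \<Rightarrow> real^3 \<Rightarrow> real^3" where "dN2v p u = vector [
   deriv G (p$3) * u$3 * Q (p$2) + G (p$3) * (deriv Q (p$2) * u$2) - deriv F (p$2) * u$2 * R (p$3) - F (p$2) * (deriv R (p$3) * u$3),
   deriv E (p$1) * u$1 * R (p$3) + E (p$1) * (deriv R (p$3) * u$3) - deriv G (p$3) * u$3 * P (p$1) - G (p$3) * (deriv P (p$1) * u$1),
   deriv F (p$2) * u$2 * P (p$1) + F (p$2) * (deriv P (p$1) * u$1) - deriv E (p$1) * u$1 * Q (p$2) - E (p$1) * (deriv Q (p$2) * u$2)]"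
definition dN3v :: "real^3 \<Rightarrow> real^3 \<Rightarrow> real^3" where "dN3v p u = vector [
   deriv F (p$2) * u$2 * M (p$3) + F (p$2) * (deriv M (p$3) * u$3) - deriv G (p$3) * u$3 * L (p$2) - G (p$3) * (deriv L (p$2) * u$2),
   deriv G (p$3) * u$3 * K (p$1) + G (p$3) * (deriv K (p$1) * u$1) - deriv E (p$1) * u$1 * M (p$3) - E (p$1) * (deriv M (p$3) * u$3),
   deriv E (p$1) * u$1 * L (p$2) + E (p$1) * (deriv L (p$2) * u$2) - deriv F (p$2) * u$2 * K (p$1) - F (p$2) * (deriv K (p$1) * u$1)]"
definition dDD :: "real^3 \<Rightarrow> real^3 \<Rightarrow> real" where "dDD p u = deriv E (p$1) * u$1 * (Cv p $ 1) + E (p$1) * (dCv p u $ 1)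
   + deriv F (p$2) * u$2 * (Cv p $ 2) + F (p$2) * (dCv p u $ 2)
   + deriv G (p$3) * u$3 * (Cv p $ 3) + G (p$3) * (dCv p u $ 3)"

lemma poly2: 
  "(dN2v p (axis k 1) $ i * Cv p $ i - N2v p $ i * dCv p (axis k 1) $ i) * DD p * Cv p $ k
   = (N2v p $ i * Cv p $ k - N2v p $ k * Cv p $ i) * (dDD p (axis k 1) * Cv p $ i - DD p * dCv p (axis k 1) $ i)"
  apply (cases i rule: three_cases; cases k rule: three_cases)
  apply (simp_all add: Cv_def N2v_def dCv_def dN2v_def DD_def dDD_def axis_def)
  apply (thin_tac "i = _", thin_tac "k = _", algebra)+
  done

lemma poly3: 
  "(dN3v p (axis k 1) $ i * Cv p $ i - N3v p $ i * dCv p (axis k 1) $ i) * DD p * Cv p $ k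
   = (N3v p $ i * Cv p $ k - N3v p $ k * Cv p $ i) * (dDD p (axis k 1) * Cv p $ i - DD p * dCv p (axis k 1) $ i)"
  apply (cases i rule: three_cases; cases k rule: three_cases)
  apply (simp_all add: Cv_def N3v_def dCv_def dN3v_def DD_def dDD_def axis_def)
  apply (thin_tac "i = _", thin_tac "k = _", algebra)+
  done


definition gv :: "real^3 \<Rightarrow> real^3" where "gv p = (\<chi> i. DD p / Cv p $ i)"
definition r2 :: "real^3 \<Rightarrow> real^3" where "r2 p = (\<chi> i. N2v p $ i / Cv p $ i)"
definition r3 :: "real^3 \<Rightarrow> real^3" where "r3 p = (\<chi> i. N3v p $ i / Cv p $ i)"
definition dg :: "real^3 \<Rightarrow> real^3 \<Rightarrow> real^3" where
  "dg p u = (\<chi> i. (dDD p u * Cv p $ i - DD p * dCv p u $ i) / (Cv p $ i)^2)"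
definition dr2 :: "real^3 \<Rightarrow> real^3 \<Rightarrow> real^3" where
  "dr2 p u = (\<chi> i. (dN2v p u $ i * Cv p $ i - N2v p $ i * dCv p u $ i) / (Cv p $ i)^2)"
definition dr3 :: "real^3 \<Rightarrow> real^3 \<Rightarrow> real^3" where
  "dr3 p u = (\<chi> i. (dN3v p u $ i * Cv p $ i - N3v p $ i * dCv p u $ i) / (Cv p $ i)^2)"

lemma g_coeff_eq: "g_coeff E F G K L M P Q R p = gv p"
  unfolding g_coeff_def gv_def Let_def vec_eq_iff forall_3 Delta_def DD_def Cv_def
  by (simp add: algebra_simps)

lemma I2_coeff_eq: "I2_coeff E F G K L M P Q R p = (\<chi> i. r2 p $ i * gv p $ i)"
  unfolding I2_coeff_def gv_def r2_def Let_def vec_eq_iff forall_3 Delta_def DD_def Cv_def N2v_def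
  by (simp add: algebra_simps power2_eq_square)

lemma I3_coeff_eq: "I3_coeff E F G K L M P Q R p = (\<chi> i. r3 p $ i * gv p $ i)"
  unfolding I3_coeff_def gv_def r3_def Let_def vec_eq_iff forall_3 Delta_def DD_def Cv_def N3v_def
  by (simp add: algebra_simps power2_eq_square)

lemma DD_Delta: "DD p = Delta E F G K L M P Q R p"
  unfolding DD_def Cv_def Delta_def Let_def by (simp add: algebra_simps)

lemma divlem:
  fixes c c' dn n n' d dd dc :: real
  assumes "c \<noteq> 0" "c' \<noteq> 0" "(dn*c - n*dc)*d*c' = (n*c' - n'*c)*(dd*c - d*dc)"
  shows "(dn*c - n*dc)/c^2 * (d/c) = (n/c - n'/c')*((dd*c - d*dc)/c^2)"
proof -
  have "(dn*c - n*dc)/c^2 * (d/c) = ((dn*c - n*dc)*d*c') / (c^3 * c')"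
    using assms by (simp add: field_simps power2_eq_square power3_eq_cube)
  also have "\<dots> = ((n*c' - n'*c)*(dd*c - d*dc)) / (c^3 * c')" using assms(3) by simp
  also have "\<dots> = (n/c - n'/c')*((dd*c - d*dc)/c^2)"
    using assms by (simp add: field_simps power2_eq_square power3_eq_cube)
  finally show ?thesis .
qed

lemma staeckel2:
  assumes "Cv p $ i \<noteq> 0" "Cv p $ k \<noteq> 0"
  shows "dr2 p (axis k 1) $ i * gv p $ i = (r2 p $ i - r2 p $ k) * dg p (axis k 1) $ i"
  unfolding dr2_def gv_def r2_def dg_def vec_lambda_beta
  by (rule divlem[OF assms poly2])

lemma staeckel3:
  assumes "Cv p $ i \<noteq> 0" "Cv p $ k \<noteq> 0"
  shows "dr3 p (axis k 1) $ i * gv p $ i = (r3 p $ i - r3 p $ k) * dg p (axis k 1) $ i"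
  unfolding dr3_def gv_def r3_def dg_def vec_lambda_beta
  by (rule divlem[OF assms poly3])

definition diffat :: "real^3 \<Rightarrow> bool" where
  "diffat p \<longleftrightarrow> E differentiable (at (p$1)) \<and> K differentiable (at (p$1)) \<and> P differentiable (at (p$1)) \<and>
     F differentiable (at (p$2)) \<and> L differentiable (at (p$2)) \<and> Q differentiable (at (p$2)) \<and>
     G differentiable (at (p$3)) \<and> M differentiable (at (p$3)) \<and> R differentiable (at (p$3))"

lemma comp_deriv:
  fixes X :: "real \<Rightarrow> real"
  assumes "(\<gamma> has_vector_derivative u) (at s)" "X differentiable (at (\<gamma> s $ m))"
  shows "((\<lambda>s. X (\<gamma> s $ m)) has_real_derivative deriv X (\<gamma> s $ m) * u$m) (at s)"
proof -
  have c: "((\<lambda>s. \<gamma> s $ m) has_real_derivative u $ m) (at s)"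
    using bounded_linear.has_vector_derivative[OF bounded_linear_vec_nth assms(1)]
    by (simp add: has_real_derivative_iff_has_vector_derivative)
  have x: "(X has_real_derivative deriv X (\<gamma> s $ m)) (at (\<gamma> s $ m))"
    using assms(2) DERIV_deriv_iff_real_differentiable by blast
  show ?thesis using DERIV_chain2[OF x c] .
qed

lemma minor_deriv:
  fixes f1 f2 f3 f4 :: "real \<Rightarrow> real"
  assumes "(f1 has_real_derivative a) (at s)" "(f2 has_real_derivative b) (at s)"
    "(f3 has_real_derivative c) (at s)" "(f4 has_real_derivative d) (at s)"
  shows "((\<lambda>s. f1 s * f2 s - f3 s * f4 s) has_real_derivative a * f2 s + f1 s * b - c * f4 s - f3 s * d) (at s)"
  by (rule DERIV_cong[OF DERIV_diff[OF DERIV_mult[OF assms(1,2)] DERIV_mult[OF assms(3,4)]]]) (simp add: algebra_simps)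

lemma path_derivs:
  assumes g: "(\<gamma> has_vector_derivative u) (at s)" and d: "diffat (\<gamma> s)"
  shows "((\<lambda>s. Cv (\<gamma> s) $ j) has_real_derivative dCv (\<gamma> s) u $ j) (at s)"
    and "((\<lambda>s. N2v (\<gamma> s) $ j) has_real_derivative dN2v (\<gamma> s) u $ j) (at s)"
    and "((\<lambda>s. N3v (\<gamma> s) $ j) has_real_derivative dN3v (\<gamma> s) u $ j) (at s)"
    and "((\<lambda>s. DD (\<gamma> s)) has_real_derivative dDD (\<gamma> s) u) (at s)"
proof -
  note dd = d[unfolded diffat_def]
  have dE: "((\<lambda>s. E (\<gamma> s $ 1)) has_real_derivative deriv E (\<gamma> s $ 1) * u$1) (at s)" using comp_deriv[OF g] dd by blast
  have dK: "((\<lambda>s. K (\<gamma> s $ 1)) has_real_derivative deriv K (\<gamma> s $ 1) * u$1) (at s)" using comp_deriv[OF g] dd by blast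
  have dP: "((\<lambda>s. P (\<gamma> s $ 1)) has_real_derivative deriv P (\<gamma> s $ 1) * u$1) (at s)" using comp_deriv[OF g] dd by blast
  have dF: "((\<lambda>s. F (\<gamma> s $ 2)) has_real_derivative deriv F (\<gamma> s $ 2) * u$2) (at s)" using comp_deriv[OF g] dd by blast
  have dL: "((\<lambda>s. L (\<gamma> s $ 2)) has_real_derivative deriv L (\<gamma> s $ 2) * u$2) (at s)" using comp_deriv[OF g] dd by blast
  have dQ: "((\<lambda>s. Q (\<gamma> s $ 2)) has_real_derivative deriv Q (\<gamma> s $ 2) * u$2) (at s)" using comp_deriv[OF g] dd by blast
  have dG: "((\<lambda>s. G (\<gamma> s $ 3)) has_real_derivative deriv G (\<gamma> s $ 3) * u$3) (at s)" using comp_deriv[OF g] dd by blast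
  have dM: "((\<lambda>s. M (\<gamma> s $ 3)) has_real_derivative deriv M (\<gamma> s $ 3) * u$3) (at s)" using comp_deriv[OF g] dd by blast
  have dR: "((\<lambda>s. R (\<gamma> s $ 3)) has_real_derivative deriv R (\<gamma> s $ 3) * u$3) (at s)" using comp_deriv[OF g] dd by blast
  have C1: "((\<lambda>s. Cv (\<gamma> s) $ 1) has_real_derivative dCv (\<gamma> s) u $ 1) (at s)"
    unfolding Cv_def dCv_def vector_3 by (rule minor_deriv[OF dL dR dM dQ])
  have C2: "((\<lambda>s. Cv (\<gamma> s) $ 2) has_real_derivative dCv (\<gamma> s) u $ 2) (at s)"
    unfolding Cv_def dCv_def vector_3 by (rule minor_deriv[OF dM dP dK dR])
  have C3: "((\<lambda>s. Cv (\<gamma> s) $ 3) has_real_derivative dCv (\<gamma> s) u $ 3) (at s)"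
    unfolding Cv_def dCv_def vector_3 by (rule minor_deriv[OF dK dQ dL dP])
  show "((\<lambda>s. Cv (\<gamma> s) $ j) has_real_derivative dCv (\<gamma> s) u $ j) (at s)"
    using C1 C2 C3 by (cases j rule: three_cases) simp_all
  have N2v1: "((\<lambda>s. N2v (\<gamma> s) $ 1) has_real_derivative dN2v (\<gamma> s) u $ 1) (at s)"
    unfolding N2v_def dN2v_def vector_3 by (rule minor_deriv[OF dG dQ dF dR])
  have N2v2: "((\<lambda>s. N2v (\<gamma> s) $ 2) has_real_derivative dN2v (\<gamma> s) u $ 2) (at s)"
    unfolding N2v_def dN2v_def vector_3 by (rule minor_deriv[OF dE dR dG dP])
  have N2v3: "((\<lambda>s. N2v (\<gamma> s) $ 3) has_real_derivative dN2v (\<gamma> s) u $ 3) (at s)"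
    unfolding N2v_def dN2v_def vector_3 by (rule minor_deriv[OF dF dP dE dQ])
  show "((\<lambda>s. N2v (\<gamma> s) $ j) has_real_derivative dN2v (\<gamma> s) u $ j) (at s)"
    using N2v1 N2v2 N2v3 by (cases j rule: three_cases) simp_all
  have N3v1: "((\<lambda>s. N3v (\<gamma> s) $ 1) has_real_derivative dN3v (\<gamma> s) u $ 1) (at s)"
    unfolding N3v_def dN3v_def vector_3 by (rule minor_deriv[OF dF dM dG dL])
  have N3v2: "((\<lambda>s. N3v (\<gamma> s) $ 2) has_real_derivative dN3v (\<gamma> s) u $ 2) (at s)"
    unfolding N3v_def dN3v_def vector_3 by (rule minor_deriv[OF dG dK dE dM])
  have N3v3: "((\<lambda>s. N3v (\<gamma> s) $ 3) has_real_derivative dN3v (\<gamma> s) u $ 3) (at s)"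
    unfolding N3v_def dN3v_def vector_3 by (rule minor_deriv[OF dE dL dF dK])
  show "((\<lambda>s. N3v (\<gamma> s) $ j) has_real_derivative dN3v (\<gamma> s) u $ j) (at s)"
    using N3v1 N3v2 N3v3 by (cases j rule: three_cases) simp_all
  show "((\<lambda>s. DD (\<gamma> s)) has_real_derivative dDD (\<gamma> s) u) (at s)"
    unfolding DD_def dDD_def
    by (rule DERIV_cong[OF DERIV_add[OF DERIV_add[OF DERIV_mult[OF dE C1] DERIV_mult[OF dF C2]] DERIV_mult[OF dG C3]]])
       (simp add: algebra_simps)
qed

lemma quot_deriv:
  fixes f c :: "real \<Rightarrow> real"
  assumes "(f has_real_derivative a) (at s)" "(c has_real_derivative b) (at s)" "c s \<noteq> 0"
  shows "((\<lambda>s. f s / c s) has_real_derivative (a * c s - f s * b) / (c s)^2) (at s)"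
  using DERIV_divide[OF assms] by (simp add: power2_eq_square)

lemma path_derivs2:
  assumes g: "(\<gamma> has_vector_derivative u) (at s)" and d: "diffat (\<gamma> s)" and c: "Cv (\<gamma> s) $ j \<noteq> 0"
  shows "((\<lambda>s. gv (\<gamma> s) $ j) has_real_derivative dg (\<gamma> s) u $ j) (at s)"
    and "((\<lambda>s. r2 (\<gamma> s) $ j) has_real_derivative dr2 (\<gamma> s) u $ j) (at s)"
    and "((\<lambda>s. r3 (\<gamma> s) $ j) has_real_derivative dr3 (\<gamma> s) u $ j) (at s)"
  unfolding gv_def dg_def r2_def dr2_def r3_def dr3_def vec_lambda_beta
  by (rule quot_deriv[OF path_derivs(4)[OF g d] path_derivs(1)[OF g d] c]
       quot_deriv[OF path_derivs(2)[OF g d] path_derivs(1)[OF g d] c]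
       quot_deriv[OF path_derivs(3)[OF g d] path_derivs(1)[OF g d] c])+

lemma lin_base:
  "dCv p u $ i = (\<Sum>k\<in>UNIV. u$k * dCv p (axis k 1) $ i)"
  "dN2v p u $ i = (\<Sum>k\<in>UNIV. u$k * dN2v p (axis k 1) $ i)"
  "dN3v p u $ i = (\<Sum>k\<in>UNIV. u$k * dN3v p (axis k 1) $ i)"
  "dDD p u = (\<Sum>k\<in>UNIV. u$k * dDD p (axis k 1))"
  by (cases i rule: three_cases; simp add: sum_3 dCv_def dN2v_def dN3v_def dDD_def axis_def algebra_simps)+

lemma lin_q:
  fixes c d :: real and u :: "real^3"
  shows "((\<Sum>k\<in>UNIV. u$k * a k) * c - d * (\<Sum>k\<in>UNIV. u$k * b k)) / c^2
       = (\<Sum>k\<in>UNIV. u$k * ((a k * c - d * b k) / c^2))"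
  by (simp add: sum_3 algebra_simps add_divide_distrib diff_divide_distrib)

lemma lin_d:
  "dg p u $ i = (\<Sum>k\<in>UNIV. u$k * dg p (axis k 1) $ i)"
  "dr2 p u $ i = (\<Sum>k\<in>UNIV. u$k * dr2 p (axis k 1) $ i)"
  "dr3 p u $ i = (\<Sum>k\<in>UNIV. u$k * dr3 p (axis k 1) $ i)"
proof -
  show "dg p u $ i = (\<Sum>k\<in>UNIV. u$k * dg p (axis k 1) $ i)"
    unfolding dg_def vec_lambda_beta by (simp only: lin_base(4)[of p u] lin_base(1)[of p u i]) (rule lin_q)
  show "dr2 p u $ i = (\<Sum>k\<in>UNIV. u$k * dr2 p (axis k 1) $ i)"
    unfolding dr2_def vec_lambda_beta by (simp only: lin_base(2)[of p u i] lin_base(1)[of p u i]) (rule lin_q)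
  show "dr3 p u $ i = (\<Sum>k\<in>UNIV. u$k * dr3 p (axis k 1) $ i)"
    unfolding dr3_def vec_lambda_beta by (simp only: lin_base(3)[of p u i] lin_base(1)[of p u i]) (rule lin_q)
qed

lemma line_deriv: "((\<lambda>t. p + t *\<^sub>R axis i 1) has_vector_derivative axis i 1) (at 0)"
  by (rule derivative_eq_intros | simp)+

lemma partial_gv:
  assumes "diffat p" "Cv p $ j \<noteq> 0"
  shows "partial i (\<lambda>q. gv q $ j) p = dg p (axis i 1) $ j"
proof -
  have "((\<lambda>t. gv (p + t *\<^sub>R axis i 1) $ j) has_real_derivative dg (p + 0 *\<^sub>R axis i 1) (axis i 1) $ j) (at 0)"
    by (rule path_derivs2(1)[OF line_deriv]) (use assms in simp_all)
  then show ?thesis unfolding partial_def by (simp add: DERIV_imp_deriv)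
qed

lemma partial_G:
  assumes "diffat p" "\<forall>j. Cv p $ j \<noteq> 0"
  shows "partial i (\<lambda>q. diag_mat (g_coeff E F G K L M P Q R q) $ a $ b) p = (if a = b then dg p (axis i 1) $ a else 0)"
proof (cases "a = b")
  case True
  then show ?thesis using partial_gv[OF assms(1), of a i] assms(2) unfolding g_coeff_eq diag_mat_def by simp
next
  case False
  then show ?thesis unfolding diag_mat_def partial_def by (simp add: DERIV_imp_deriv)
qed

lemma christoffel_eq:
  assumes "diffat p" "\<forall>j. Cv p $ j \<noteq> 0" "\<forall>j. gv p $ j \<noteq> 0"
  shows "christoffel (\<lambda>q. diag_mat (g_coeff E F G K L M P Q R q)) k i j p
    = (1/2) * (1 / gv p $ k) * ((if j = k then dg p (axis i 1) $ k else 0) + (if i = k then dg p (axis j 1) $ k else 0)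
         - (if i = j then dg p (axis k 1) $ i else 0))"
  unfolding christoffel_def
  apply (simp only: partial_G[OF assms(1,2)])
  unfolding g_coeff_eq matrix_inv_diag[OF assms(3)]
  unfolding diag_mat_def
  by (simp add: if_distrib[of "\<lambda>x. x * _"] cong: if_cong)

end

theorem proposition1:
  fixes E F G K L M P Q R :: "real \<Rightarrow> real"
    and U :: "(real^3) set" and lam mu :: real
  defines "Gm \<equiv> (\<lambda>p. diag_mat (g_coeff E F G K L M P Q R p))"
    and "Dirs \<equiv> (\<lambda>p. {v::real^3. v \<noteq> 0 \<and>
            diag_quad (I2_coeff E F G K L M P Q R p) v - lam * diag_quad (g_coeff E F G K L M P Q R p) v = 0 \<and>
            diag_quad (I3_coeff E F G K L M P Q R p) v - mu * diag_quad (g_coeff E F G K L M P Q R p) v = 0})"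
  assumes U_open: "open U"
    and smooth_x: "smooth_on ((\<lambda>p. p$1) ` U) E" "smooth_on ((\<lambda>p. p$1) ` U) K" "smooth_on ((\<lambda>p. p$1) ` U) P"
    and smooth_y: "smooth_on ((\<lambda>p. p$2) ` U) F" "smooth_on ((\<lambda>p. p$2) ` U) L" "smooth_on ((\<lambda>p. p$2) ` U) Q"
    and smooth_z: "smooth_on ((\<lambda>p. p$3) ` U) G" "smooth_on ((\<lambda>p. p$3) ` U) M" "smooth_on ((\<lambda>p. p$3) ` U) R"
    and Delta_nz: "\<forall>p\<in>U. Delta E F G K L M P Q R p \<noteq> 0"
    and den_nz: "\<forall>p\<in>U. L (p$2) * R (p$3) - M (p$3) * Q (p$2) \<noteq> 0 \<and>
                        M (p$3) * P (p$1) - K (p$1) * R (p$3) \<noteq> 0 \<and>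
                        K (p$1) * Q (p$2) - L (p$2) * P (p$1) \<noteq> 0"
    and four_dirs: "\<forall>p\<in>U. card ((\<lambda>v. span {v}) ` Dirs p) = 4"
  shows
    "(\<forall>I c c' c''. is_interval I \<and> open I \<and>
        (\<forall>t\<in>I. c t \<in> U \<and> (c has_vector_derivative c' t) (at t) \<and>
                (c' has_vector_derivative c'' t) (at t) \<and> c' t \<in> Dirs (c t))
        \<longrightarrow> pregeodesic Gm I c c' c'')
     \<and> (\<forall>p\<in>U. \<forall>i j. i \<noteq> j \<longrightarrow>
          (\<forall>n1\<in>g_perp Gm p (coord_plane i). \<forall>n2\<in>g_perp Gm p (coord_plane j). bilin Gm p n1 n2 = 0))
     \<and> (\<forall>p\<in>U. \<forall>v\<in>Dirs p.
          (\<lambda>i. span {g_reflect Gm p (coord_plane i) v}) ` UNIV = (\<lambda>w. span {w}) ` Dirs p - {span {v}})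
     \<and> (\<forall>i. integrable_distribution U (\<lambda>p. coord_plane i))"
proof -
  let ?gv = "gv E F G K L M P Q R" and ?r2 = "r2 E F G K L M P Q R" and ?r3 = "r3 E F G K L M P Q R"
  let ?dg = "dg E F G K L M P Q R" and ?dr2 = "dr2 E F G K L M P Q R" and ?dr3 = "dr3 E F G K L M P Q R"
  let ?Cv = "Cv K L M P Q R"
  have dif: "diffat E F G K L M P Q R p" if p: "p \<in> U" for p
  proof -
    have x: "p$1 \<in> (\<lambda>p. p$1) ` U" and y: "p$2 \<in> (\<lambda>p. p$2) ` U" and z: "p$3 \<in> (\<lambda>p. p$3) ` U"
      using p by blast+
    show ?thesis unfolding diffat_def
      using smooth_diff[OF smooth_x(1) x] smooth_diff[OF smooth_x(2) x] smooth_diff[OF smooth_x(3) x]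
        smooth_diff[OF smooth_y(1) y] smooth_diff[OF smooth_y(2) y] smooth_diff[OF smooth_y(3) y]
        smooth_diff[OF smooth_z(1) z] smooth_diff[OF smooth_z(2) z] smooth_diff[OF smooth_z(3) z]
      by blast
  qed
  have Cnz: "\<forall>j. ?Cv p $ j \<noteq> 0" if p: "p \<in> U" for p
    using den_nz p unfolding Cv_def forall_3 by simp
  have gnz: "\<forall>j. ?gv p $ j \<noteq> 0" if p: "p \<in> U" for p
    using Cnz[OF p] Delta_nz p unfolding gv_def DD_Delta by simp
  define \<alpha> where "\<alpha> p = (\<chi> i. (?r2 p $ i - lam) * ?gv p $ i)" for p
  define \<beta> where "\<beta> p = (\<chi> i. (?r3 p $ i - mu) * ?gv p $ i)" for p
  have Dirs_S: "Dirs p = Sset (\<alpha> p) (\<beta> p)" for p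
    unfolding Dirs_def Sset_def diag_quad_def I2_coeff_eq I3_coeff_eq g_coeff_eq \<alpha>_def \<beta>_def
    by (simp add: sum_3 algebra_simps)
  have c4: "card ((\<lambda>v. span {v}) ` Sset (\<alpha> p) (\<beta> p)) = 4" if "p \<in> U" for p
    using four_dirs that Dirs_S by simp
  have Gm_eq: "Gm = (\<lambda>q. diag_mat (?gv q))" unfolding Gm_def g_coeff_eq ..
  have P2: "\<forall>p\<in>U. \<forall>i j. i \<noteq> j \<longrightarrow>
          (\<forall>n1\<in>g_perp Gm p (coord_plane i). \<forall>n2\<in>g_perp Gm p (coord_plane j). bilin Gm p n1 n2 = 0)"
    unfolding Gm_eq using perp_orth gnz by blast
  have P3: "\<forall>p\<in>U. \<forall>v\<in>Dirs p.
          (\<lambda>i. span {g_reflect Gm p (coord_plane i) v}) ` UNIV = (\<lambda>w. span {w}) ` Dirs p - {span {v}}"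
  proof (intro ballI)
    fix p v assume p: "p \<in> U" and v: "v \<in> Dirs p"
    have "g_reflect Gm p (coord_plane i) v = flip i v" for i
      unfolding Gm_eq by (rule reflect_flip[where a="?gv", OF gnz[OF p]])
    then show "(\<lambda>i. span {g_reflect Gm p (coord_plane i) v}) ` UNIV = (\<lambda>w. span {w}) ` Dirs p - {span {v}}"
      using reflect_lines[OF c4[OF p], of v] v unfolding Dirs_S by simp
  qed
  have P4: "\<forall>i. integrable_distribution U (\<lambda>p. coord_plane i)"
    using coord_integrable[OF U_open] by blast
  have P1: "pregeodesic Gm I c c' c''"
    if H: "is_interval I \<and> open I \<and> (\<forall>t\<in>I. c t \<in> U \<and> (c has_vector_derivative c' t) (at t) \<and>
                (c' has_vector_derivative c'' t) (at t) \<and> c' t \<in> Dirs (c t))" for I c c' c''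
    unfolding pregeodesic_def
  proof
    fix t assume t: "t \<in> I"
    have oI: "open I" using H by blast
    have cU: "c t \<in> U" and dc: "(c has_vector_derivative c' t) (at t)"
      and ddc: "(c' has_vector_derivative c'' t) (at t)" and cD: "c' t \<in> Dirs (c t)"
      using H t by blast+
    define p where "p = c t"
    define v where "v = c' t"
    define w where "w = c'' t"
    have pU: "p \<in> U" unfolding p_def by (rule cU)
    have vS: "v \<in> Sset (\<alpha> p) (\<beta> p)" using cD unfolding p_def v_def Dirs_S .
    note C4 = card4[OF c4[OF pU] vS]
    have v0: "\<forall>i. v$i \<noteq> 0" using C4 by blast
    have ind: "\<not> (((?r2 p$1 - lam) * ?gv p$1) * ((?r3 p$2 - mu) * ?gv p$2) = ((?r2 p$2 - lam) * ?gv p$2) * ((?r3 p$1 - mu) * ?gv p$1) \<and>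
                 ((?r2 p$1 - lam) * ?gv p$1) * ((?r3 p$3 - mu) * ?gv p$3) = ((?r2 p$3 - lam) * ?gv p$3) * ((?r3 p$1 - mu) * ?gv p$1) \<and>
                 ((?r2 p$2 - lam) * ?gv p$2) * ((?r3 p$3 - mu) * ?gv p$3) = ((?r2 p$3 - lam) * ?gv p$3) * ((?r3 p$2 - mu) * ?gv p$2))"
      using C4 unfolding \<alpha>_def \<beta>_def by simp
    have c2: "(\<Sum>i\<in>UNIV. (?r2 p$i - lam) * ?gv p$i * (v$i)^2) = 0"
      using vS unfolding Sset_def \<alpha>_def by simp
    have c3: "(\<Sum>i\<in>UNIV. (?r3 p$i - mu) * ?gv p$i * (v$i)^2) = 0"
      using vS unfolding Sset_def \<beta>_def by simp
    have comp: "((\<lambda>s. c' s $ i) has_real_derivative w $ i) (at t)" for i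
      using bounded_linear.has_vector_derivative[OF bounded_linear_vec_nth ddc] unfolding w_def
      by (simp add: has_real_derivative_iff_has_vector_derivative)
    have sqd: "((\<lambda>s. (c' s $ i)^2) has_real_derivative 2 * v$i * w$i) (at t)" for i
      using DERIV_power[OF comp[of i], of 2] unfolding v_def by (simp add: algebra_simps)
    have zero_der: "D = 0"
      if d: "((\<lambda>s. \<Sum>i\<in>UNIV. (rr (c s) $ i - lm) * ?gv (c s) $ i * (c' s $ i)^2) has_real_derivative D) (at t)"
        and z: "\<forall>s\<in>I. (\<Sum>i\<in>UNIV. (rr (c s) $ i - lm) * ?gv (c s) $ i * (c' s $ i)^2) = 0" for rr lm D
    proof -
      have "((\<lambda>s. 0) has_real_derivative D) (at t)"
        by (rule has_field_derivative_transform_within_open[OF d oI t]) (use z in simp)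
      then show ?thesis using DERIV_unique[OF _ DERIV_const] by blast
    qed
    have cdir: "\<forall>s\<in>I. c' s \<in> Sset (\<alpha> (c s)) (\<beta> (c s))" using H Dirs_S by blast
    have z2: "\<forall>s\<in>I. (\<Sum>i\<in>UNIV. (?r2 (c s) $ i - lam) * ?gv (c s) $ i * (c' s $ i)^2) = 0"
      using cdir unfolding Sset_def \<alpha>_def by simp
    have z3: "\<forall>s\<in>I. (\<Sum>i\<in>UNIV. (?r3 (c s) $ i - mu) * ?gv (c s) $ i * (c' s $ i)^2) = 0"
      using cdir unfolding Sset_def \<beta>_def by simp
    have gd: "((\<lambda>s. ?gv (c s) $ i) has_real_derivative ?dg p v $ i) (at t)" for i
      using path_derivs2(1)[OF dc dif[OF cU] Cnz[OF cU, rule_format, of i]] unfolding p_def v_def .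
    have r2d: "((\<lambda>s. ?r2 (c s) $ i) has_real_derivative ?dr2 p v $ i) (at t)" for i
      using path_derivs2(2)[OF dc dif[OF cU] Cnz[OF cU, rule_format, of i]] unfolding p_def v_def .
    have r3d: "((\<lambda>s. ?r3 (c s) $ i) has_real_derivative ?dr3 p v $ i) (at t)" for i
      using path_derivs2(3)[OF dc dif[OF cU] Cnz[OF cU, rule_format, of i]] unfolding p_def v_def .
    have termd: "((\<lambda>s. (rr (c s) $ i - lm) * ?gv (c s) $ i * (c' s $ i)^2) has_real_derivative
        (drr $ i * ?gv p $ i + (rr p $ i - lm) * ?dg p v $ i) * (v$i)^2 + (rr p $ i - lm) * ?gv p $ i * (2 * v$i * w$i)) (at t)"
      if rd: "((\<lambda>s. rr (c s) $ i) has_real_derivative drr $ i) (at t)" for rr drr lm i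
      by (rule DERIV_cong[OF DERIV_mult[OF DERIV_mult[OF DERIV_diff[OF rd DERIV_const] gd] sqd]])
         (simp add: p_def v_def algebra_simps)
    have D2: "(\<Sum>i\<in>UNIV. (?dr2 p v $ i * ?gv p $ i + (?r2 p $ i - lam) * ?dg p v $ i) * (v$i)^2 + (?r2 p $ i - lam) * ?gv p $ i * (2 * v$i * w$i)) = 0"
      by (rule zero_der[OF DERIV_sum[OF termd[OF r2d]] z2])
    have D3: "(\<Sum>i\<in>UNIV. (?dr3 p v $ i * ?gv p $ i + (?r3 p $ i - mu) * ?dg p v $ i) * (v$i)^2 + (?r3 p $ i - mu) * ?gv p $ i * (2 * v$i * w$i)) = 0"
      by (rule zero_der[OF DERIV_sum[OF termd[OF r3d]] z3])
    define Gd :: "real^3^3" where "Gd = (\<chi> i k. ?dg p (axis k 1) $ i)"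
    define dr :: "real^3^3" where "dr = (\<chi> i k. ?dr2 p (axis k 1) $ i)"
    define ds :: "real^3^3" where "ds = (\<chi> i k. ?dr3 p (axis k 1) $ i)"
    have Gde: "Gd$a$b = ?dg p (axis b 1) $ a" for a b unfolding Gd_def by simp
    have l1: "(\<Sum>k\<in>UNIV. Gd$i$k * v$k) = ?dg p v $ i" for i unfolding Gd_def lin_d(1)[where u=v] by (simp add: mult.commute)
    have l2: "(\<Sum>k\<in>UNIV. dr$i$k * v$k) = ?dr2 p v $ i" for i unfolding dr_def lin_d(2)[where u=v] by (simp add: mult.commute)
    have l3: "(\<Sum>k\<in>UNIV. ds$i$k * v$k) = ?dr3 p v $ i" for i unfolding ds_def lin_d(3)[where u=v] by (simp add: mult.commute)
    have st2: "\<forall>i k. dr$i$k * ?gv p$i = (?r2 p$i - ?r2 p$k) * Gd$i$k"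
      unfolding dr_def Gd_def using staeckel2 Cnz[OF pU] by simp
    have st3: "\<forall>i k. ds$i$k * ?gv p$i = (?r3 p$i - ?r3 p$k) * Gd$i$k"
      unfolding ds_def Gd_def using staeckel3 Cnz[OF pU] by simp
    obtain a where a: "\<forall>k. w$k + (2 * (\<Sum>j\<in>UNIV. Gd$k$j * v$j) * v$k - (\<Sum>j\<in>UNIV. Gd$j$k * (v$j)^2)) / (2 * ?gv p$k) = a * v$k"
      using geo_alg[OF gnz[OF pU] st2 st3 c2 c3 _ _ v0 ind] D2 D3 unfolding l1 l2 l3 by blast
    have chr: "(\<Sum>i\<in>UNIV. \<Sum>j\<in>UNIV. christoffel Gm k i j p * v$i * v$j)
        = (2 * (\<Sum>j\<in>UNIV. Gd$k$j * v$j) * v$k - (\<Sum>j\<in>UNIV. Gd$j$k * (v$j)^2)) / (2 * ?gv p$k)" for k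
    proof -
      have "(\<Sum>i\<in>UNIV. \<Sum>j\<in>UNIV. christoffel Gm k i j p * v$i * v$j)
        = (\<Sum>i\<in>UNIV. \<Sum>j\<in>UNIV. (1/2) * (1/?gv p$k) * ((if j = k then Gd$k$i else 0) + (if i = k then Gd$k$j else 0)
            - (if i = j then Gd$i$k else 0)) * v$i * v$j)"
        unfolding Gm_def christoffel_eq[OF dif[OF pU] Cnz[OF pU] gnz[OF pU]] Gde by simp
      also have "\<dots> = (2 * (\<Sum>j\<in>UNIV. Gd$k$j * v$j) * v$k - (\<Sum>j\<in>UNIV. Gd$j$k * (v$j)^2)) / (2 * ?gv p$k)"
        by (rule chris_sum) (use gnz[OF pU] in blast)
      finally show ?thesis .
    qed
    show "\<exists>a. \<forall>k. c'' t $ k + (\<Sum>i\<in>UNIV. \<Sum>j\<in>UNIV. christoffel Gm k i j (c t) * c' t $ i * c' t $ j) = a * c' t $ k"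
    proof (rule exI[of _ a], rule allI)
      fix k
      have "c'' t $ k + (\<Sum>i\<in>UNIV. \<Sum>j\<in>UNIV. christoffel Gm k i j (c t) * c' t $ i * c' t $ j)
          = w$k + (\<Sum>i\<in>UNIV. \<Sum>j\<in>UNIV. christoffel Gm k i j p * v$i * v$j)"
        unfolding p_def v_def w_def ..
      also have "\<dots> = a * v$k" unfolding chr using a by blast
      finally show "c'' t $ k + (\<Sum>i\<in>UNIV. \<Sum>j\<in>UNIV. christoffel Gm k i j (c t) * c' t $ i * c' t $ j) = a * c' t $ k"
        unfolding v_def .
    qed
  qed
  show ?thesis using P1 P2 P3 P4 by blast
qed

end
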